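(* Let $G$ be a finitely generated torsion-free nilpotent group and suppose the decomposition $\overline{G}=R_1\times R_2$ into rational subgroups matches the decomposition $G=G_1\times G_2$. Let $X_i=R_iZ(\overline{G})\cap G$. If $H_1,H_2$ are subgroups of $G$ such that $X_i=H_iZ(G)$ for $i=1,2$ and $Z(G)=Z(H_1)\times Z(H_2)$ (internal direct product), then $G=H_1\times H_2$.
   Context: $\overline{G}$ is the rational closure of $G$ (torsion-free nilpotent, containing $G$, uniquely divisible, each element has a positive power in $G$); for $H\le G$, $\overline{H}$ is the set of elements of $\overline{G}$ having a positive power in $H$. A subgroup is rational if closed under taking all $n$-th roots. A decomposition $\overline{G}=R_1\times R_2$ matches $G=G_1\times G_2$ if $\overline{G_i}\,Z(\overline{G})=R_i\,Z(\overline{G})$ for $i=1,2$. *)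

theory Defs
  imports "HOL-Algebra.Algebra"
begin

definition grp_center :: "('a, 'b) monoid_scheme \<Rightarrow> 'a set" where
  "grp_center G = {z \<in> carrier G. \<forall>x \<in> carrier G. z \<otimes>\<^bsub>G\<^esub> x = x \<otimes>\<^bsub>G\<^esub> z}"

fun upper_central :: "('a, 'b) monoid_scheme \<Rightarrow> nat \<Rightarrow> 'a set" where
  "upper_central G 0 = {\<one>\<^bsub>G\<^esub>}"
| "upper_central G (Suc n) = {x \<in> carrier G. \<forall>y \<in> carrier G.
      x \<otimes>\<^bsub>G\<^esub> y \<otimes>\<^bsub>G\<^esub> inv\<^bsub>G\<^esub> x \<otimes>\<^bsub>G\<^esub> inv\<^bsub>G\<^esub> y \<in> upper_central G n}"

definition nilpotent_group :: "('a, 'b) monoid_scheme \<Rightarrow> bool" where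
  "nilpotent_group G \<longleftrightarrow> group G \<and> (\<exists>n. upper_central G n = carrier G)"

definition torsion_free :: "('a, 'b) monoid_scheme \<Rightarrow> bool" where
  "torsion_free G \<longleftrightarrow> (\<forall>x \<in> carrier G. \<forall>n::nat. n > 0 \<longrightarrow> x [^]\<^bsub>G\<^esub> n = \<one>\<^bsub>G\<^esub> \<longrightarrow> x = \<one>\<^bsub>G\<^esub>)"

definition finitely_generated :: "('a, 'b) monoid_scheme \<Rightarrow> bool" where
  "finitely_generated G \<longleftrightarrow> (\<exists>S. finite S \<and> S \<subseteq> carrier G \<and> generate G S = carrier G)"

definition uniquely_divisible :: "('a, 'b) monoid_scheme \<Rightarrow> bool" where
  "uniquely_divisible G \<longleftrightarrow>
     (\<forall>x \<in> carrier G. \<forall>n::nat. n > 0 \<longrightarrow> (\<exists>!y. y \<in> carrier G \<and> y [^]\<^bsub>G\<^esub> n = x))"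

definition is_rational_closure :: "('a, 'b) monoid_scheme \<Rightarrow> 'a set \<Rightarrow> bool" where
  "is_rational_closure Gbar G \<longleftrightarrow>
     group Gbar \<and> subgroup G Gbar \<and> torsion_free Gbar \<and> nilpotent_group Gbar \<and>
     uniquely_divisible Gbar \<and>
     (\<forall>x \<in> carrier Gbar. \<exists>n::nat. n > 0 \<and> x [^]\<^bsub>Gbar\<^esub> n \<in> G)"

definition rat_closure :: "('a, 'b) monoid_scheme \<Rightarrow> 'a set \<Rightarrow> 'a set" where
  "rat_closure Gbar H = {x \<in> carrier Gbar. \<exists>n::nat. n > 0 \<and> x [^]\<^bsub>Gbar\<^esub> n \<in> H}"

definition rational_subgroup :: "('a, 'b) monoid_scheme \<Rightarrow> 'a set \<Rightarrow> bool" where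
  "rational_subgroup Gbar R \<longleftrightarrow> subgroup R Gbar \<and>
     (\<forall>x \<in> carrier Gbar. \<forall>n::nat. n > 0 \<longrightarrow> x [^]\<^bsub>Gbar\<^esub> n \<in> R \<longrightarrow> x \<in> R)"

definition internal_direct_product :: "('a, 'b) monoid_scheme \<Rightarrow> 'a set \<Rightarrow> 'a set \<Rightarrow> bool" where
  "internal_direct_product K A B \<longleftrightarrow>
     A \<lhd> K \<and> B \<lhd> K \<and> A \<inter> B = {\<one>\<^bsub>K\<^esub>} \<and> A <#>\<^bsub>K\<^esub> B = carrier K"

abbreviation sub_grp :: "('a, 'b) monoid_scheme \<Rightarrow> 'a set \<Rightarrow> ('a, 'b) monoid_scheme" where
  "sub_grp Gbar H \<equiv> Gbar\<lparr>carrier := H\<rparr>"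

end

theory Submission
  imports Defs
begin

lemma (in group) comm_prod_normal:
  assumes A: "subgroup A G" and B: "subgroup B G" and AB: "A <#> B = carrier G"
    and c: "\<forall>a\<in>A. \<forall>b\<in>B. a \<otimes> b = b \<otimes> a"
  shows "A \<lhd> G"
proof -
  have sA: "A \<subseteq> carrier G" using A subgroup.subset by blast
  have sB: "B \<subseteq> carrier G" using B subgroup.subset by blast
  show ?thesis unfolding normal_inv_iff
  proof (intro conjI ballI)
    show "subgroup A G" by (rule A)
    fix x h assume x: "x \<in> carrier G" and h: "h \<in> A"
    have "x \<in> A <#> B" using x AB by simp
    then obtain a b where a: "a \<in> A" and b: "b \<in> B" and xe: "x = a \<otimes> b"
      unfolding set_mult_def by blast
    have ac: "a \<in> carrier G" "b \<in> carrier G" "h \<in> carrier G" using a b h sA sB by auto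
    have "x \<otimes> h \<otimes> inv x = a \<otimes> (b \<otimes> h) \<otimes> inv b \<otimes> inv a"
      using ac by (simp add: xe inv_mult_group m_assoc)
    also have "\<dots> = a \<otimes> (h \<otimes> b) \<otimes> inv b \<otimes> inv a"
      using ac c h b by simp
    also have "\<dots> = a \<otimes> h \<otimes> (b \<otimes> inv b) \<otimes> inv a"
      using ac by (simp add: m_assoc)
    also have "\<dots> = a \<otimes> h \<otimes> inv a"
      using ac by simp
    also have "\<dots> \<in> A"
      using A a h by (simp add: subgroup.m_closed subgroup.m_inv_closed)
    finally show "x \<otimes> h \<otimes> inv x \<in> A" .
  qed
qed

lemma (in group) comm_prod_normal2:
  assumes A: "subgroup A G" and B: "subgroup B G" and AB: "A <#> B = carrier G"
    and c: "\<forall>a\<in>A. \<forall>b\<in>B. a \<otimes> b = b \<otimes> a"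
  shows "B \<lhd> G"
proof -
  have "B <#> A = A <#> B" using c unfolding set_mult_def by fastforce
  then show ?thesis using comm_prod_normal[OF B A] AB c by metis
qed

lemma commute_of_normal_disjoint:
  fixes K (structure)
  assumes gr: "group K" and N1: "R1 \<lhd> K" and N2: "R2 \<lhd> K"
    and I: "R1 \<inter> R2 = {\<one>\<^bsub>K\<^esub>}" and a: "a \<in> R1" and b: "b \<in> R2"
  shows "a \<otimes>\<^bsub>K\<^esub> b = b \<otimes>\<^bsub>K\<^esub> a"
proof -
  interpret group K by (rule gr)
  have s1: "R1 \<subseteq> carrier K" using N1 normal_imp_subgroup subgroup.subset by blast
  have s2: "R2 \<subseteq> carrier K" using N2 normal_imp_subgroup subgroup.subset by blast
  have ac: "a \<in> carrier K" "b \<in> carrier K" using a b s1 s2 by auto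
  have sg1: "subgroup R1 K" and sg2: "subgroup R2 K" using N1 N2 normal_imp_subgroup by auto
  have "b \<otimes> a \<otimes> inv b \<in> R1" using N1 a ac normal_inv_iff by blast
  then have c1: "b \<otimes> a \<otimes> inv b \<otimes> inv a \<in> R1"
    using sg1 a by (simp add: subgroup.m_closed subgroup.m_inv_closed)
  have "a \<otimes> inv b \<otimes> inv a \<in> R2"
    using N2 b ac normal_inv_iff sg2 subgroup.m_inv_closed by (metis inv_closed)
  then have c2: "b \<otimes> (a \<otimes> inv b \<otimes> inv a) \<in> R2"
    using sg2 b by (simp add: subgroup.m_closed)
  have "b \<otimes> a \<otimes> inv b \<otimes> inv a = \<one>"
    using c1 c2 I ac by (simp add: m_assoc) blast
  then have "b \<otimes> a \<otimes> inv b \<otimes> inv a \<otimes> (a \<otimes> b) = a \<otimes> b" using ac by simp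
  moreover have "b \<otimes> a \<otimes> inv b \<otimes> inv a \<otimes> (a \<otimes> b) = b \<otimes> a \<otimes> inv b \<otimes> (inv a \<otimes> a) \<otimes> b"
    using ac by (simp only: m_assoc inv_closed m_closed)
  moreover have "\<dots> = b \<otimes> a \<otimes> inv b \<otimes> b" using ac by simp
  moreover have "\<dots> = b \<otimes> a \<otimes> (inv b \<otimes> b)" using ac by (simp add: m_assoc)
  ultimately show ?thesis using ac by simp
qed

lemma main_aux:
  fixes Gbar :: "('a, 'b) monoid_scheme" (structure)
    and G G1 G2 R1 R2 H1 H2 :: "'a set"
  assumes fg: "finitely_generated (sub_grp Gbar G)"
    and nil: "nilpotent_group (sub_grp Gbar G)"
    and tf: "torsion_free (sub_grp Gbar G)"
    and closure: "is_rational_closure Gbar G"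
    and decG: "internal_direct_product (sub_grp Gbar G) G1 G2"
    and rat1: "rational_subgroup Gbar R1"
    and rat2: "rational_subgroup Gbar R2"
    and decR: "internal_direct_product Gbar R1 R2"
    and match1: "rat_closure Gbar G1 <#>\<^bsub>Gbar\<^esub> grp_center Gbar = R1 <#>\<^bsub>Gbar\<^esub> grp_center Gbar"
    and match2: "rat_closure Gbar G2 <#>\<^bsub>Gbar\<^esub> grp_center Gbar = R2 <#>\<^bsub>Gbar\<^esub> grp_center Gbar"
    and H1: "subgroup H1 (sub_grp Gbar G)"
    and H2: "subgroup H2 (sub_grp Gbar G)"
    and X1: "(R1 <#>\<^bsub>Gbar\<^esub> grp_center Gbar) \<inter> G = H1 <#>\<^bsub>Gbar\<^esub> grp_center (sub_grp Gbar G)"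
    and X2: "(R2 <#>\<^bsub>Gbar\<^esub> grp_center Gbar) \<inter> G = H2 <#>\<^bsub>Gbar\<^esub> grp_center (sub_grp Gbar G)"
    and ZG: "internal_direct_product (sub_grp Gbar (grp_center (sub_grp Gbar G)))
               (grp_center (sub_grp Gbar H1)) (grp_center (sub_grp Gbar H2))"
  shows "internal_direct_product (sub_grp Gbar G) H1 H2"
proof -
  define Z where "Z = grp_center Gbar"
  define ZG' where "ZG' = grp_center (sub_grp Gbar G)"
  define C1 where "C1 = grp_center (sub_grp Gbar H1)"
  define C2 where "C2 = grp_center (sub_grp Gbar H2)"
  have grp: "group Gbar" and sG: "subgroup G Gbar" using closure unfolding is_rational_closure_def by auto
  interpret group Gbar by (rule grp)
  have Gc: "G \<subseteq> carrier Gbar" using sG subgroup.subset by blast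
  have K: "group (sub_grp Gbar G)" using sG subgroup.subgroup_is_group grp by blast
  have H1G: "H1 \<subseteq> G" using H1 subgroup.subset by fastforce
  have H2G: "H2 \<subseteq> G" using H2 subgroup.subset by fastforce
  have N1: "R1 \<lhd> Gbar" and N2: "R2 \<lhd> Gbar" and IR: "R1 \<inter> R2 = {\<one>}"
    using decR unfolding internal_direct_product_def by auto
  have R1c: "R1 \<subseteq> carrier Gbar" using N1 normal_imp_subgroup subgroup.subset by blast
  have R2c: "R2 \<subseteq> carrier Gbar" using N2 normal_imp_subgroup subgroup.subset by blast
  have Zc: "Z \<subseteq> carrier Gbar" unfolding Z_def grp_center_def by auto
  have ZG'G: "ZG' \<subseteq> G" unfolding ZG'_def grp_center_def by auto
  have ZG'comm: "\<And>z x. z \<in> ZG' \<Longrightarrow> x \<in> G \<Longrightarrow> z \<otimes> x = x \<otimes> z"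
    unfolding ZG'_def grp_center_def by auto
  have "\<one> \<in> G" using sG subgroup.one_closed by blast
  then have one_ZG': "\<one> \<in> ZG'" unfolding ZG'_def grp_center_def using Gc by auto
  have RR: "\<And>a b. a \<in> R1 \<Longrightarrow> b \<in> R2 \<Longrightarrow> a \<otimes> b = b \<otimes> a"
    using commute_of_normal_disjoint[OF grp N1 N2] IR by simp
  have commX: "\<And>x y. x \<in> R1 <#> Z \<Longrightarrow> y \<in> R2 <#> Z \<Longrightarrow> x \<otimes> y = y \<otimes> x"
  proof -
    fix x y assume "x \<in> R1 <#> Z" "y \<in> R2 <#> Z"
    then obtain a z b w where a: "a \<in> R1" and z: "z \<in> Z" and b: "b \<in> R2" and w: "w \<in> Z"
      and xe: "x = a \<otimes> z" and ye: "y = b \<otimes> w" unfolding set_mult_def by auto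
    have ac: "a \<in> carrier Gbar" "b \<in> carrier Gbar" "z \<in> carrier Gbar" "w \<in> carrier Gbar"
      using a b z w R1c R2c Zc by auto
    have zc: "\<And>u. u \<in> carrier Gbar \<Longrightarrow> z \<otimes> u = u \<otimes> z"
      using z unfolding Z_def grp_center_def by auto
    have wc: "\<And>u. u \<in> carrier Gbar \<Longrightarrow> w \<otimes> u = u \<otimes> w"
      using w unfolding Z_def grp_center_def by auto
    have "x \<otimes> y = a \<otimes> (z \<otimes> (b \<otimes> w))" using ac by (simp add: xe ye m_assoc)
    also have "\<dots> = a \<otimes> b \<otimes> (z \<otimes> w)" using ac zc[of b] by (simp add: m_assoc[symmetric])
    also have "\<dots> = b \<otimes> a \<otimes> (w \<otimes> z)" using RR[OF a b] zc[of w] ac by simp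
    also have "\<dots> = b \<otimes> (w \<otimes> (a \<otimes> z))" using ac wc[of a] by (simp add: m_assoc[symmetric])
    also have "\<dots> = y \<otimes> x" using ac by (simp add: xe ye m_assoc)
    finally show "x \<otimes> y = y \<otimes> x" .
  qed
  have HX1: "H1 \<subseteq> R1 <#> Z"
  proof
    fix h assume h: "h \<in> H1"
    then have "h \<otimes> \<one> \<in> H1 <#> ZG'" using one_ZG' unfolding set_mult_def by blast
    moreover have "h \<in> carrier Gbar" using h H1G Gc by auto
    ultimately have "h \<in> H1 <#> ZG'" by simp
    then have "h \<in> (R1 <#> grp_center Gbar) \<inter> G" using X1 unfolding ZG'_def by simp
    then show "h \<in> R1 <#> Z" unfolding Z_def by simp
  qed
  have HX2: "H2 \<subseteq> R2 <#> Z"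
  proof
    fix h assume h: "h \<in> H2"
    then have "h \<otimes> \<one> \<in> H2 <#> ZG'" using one_ZG' unfolding set_mult_def by blast
    moreover have "h \<in> carrier Gbar" using h H2G Gc by auto
    ultimately have "h \<in> H2 <#> ZG'" by simp
    then have "h \<in> (R2 <#> grp_center Gbar) \<inter> G" using X2 unfolding ZG'_def by simp
    then show "h \<in> R2 <#> Z" unfolding Z_def by simp
  qed
  have HH: "\<And>a b. a \<in> H1 \<Longrightarrow> b \<in> H2 \<Longrightarrow> a \<otimes> b = b \<otimes> a"
    using HX1 HX2 commX by blast
  have one1: "\<one> \<in> Z" unfolding Z_def grp_center_def by auto
  have G12: "G1 \<subseteq> G" "G2 \<subseteq> G"
  proof -
    have "G1 \<lhd> sub_grp Gbar G" "G2 \<lhd> sub_grp Gbar G" using decG unfolding internal_direct_product_def by auto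
    then have "subgroup G1 (sub_grp Gbar G)" "subgroup G2 (sub_grp Gbar G)" using normal_imp_subgroup by auto
    then show "G1 \<subseteq> G" "G2 \<subseteq> G" using subgroup.subset by fastforce+
  qed
  have GX1: "G1 \<subseteq> R1 <#> Z"
  proof
    fix g assume g: "g \<in> G1"
    have gc: "g \<in> carrier Gbar" using g Gc G12 by auto
    then have "g \<in> rat_closure Gbar G1" unfolding rat_closure_def using g
      by (auto intro!: exI[of _ 1])
    then have "g \<otimes> \<one> \<in> rat_closure Gbar G1 <#> Z" using one1 unfolding set_mult_def by blast
    then show "g \<in> R1 <#> Z" using match1 gc unfolding Z_def by simp
  qed
  have GX2: "G2 \<subseteq> R2 <#> Z"
  proof
    fix g assume g: "g \<in> G2"
    have gc: "g \<in> carrier Gbar" using g Gc G12 by auto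
    then have "g \<in> rat_closure Gbar G2" unfolding rat_closure_def using g
      by (auto intro!: exI[of _ 1])
    then have "g \<otimes> \<one> \<in> rat_closure Gbar G2 <#> Z" using one1 unfolding set_mult_def by blast
    then show "g \<in> R2 <#> Z" using match2 gc unfolding Z_def by simp
  qed
  have ZGu: "C1 \<lhd> sub_grp Gbar ZG'" "C2 \<lhd> sub_grp Gbar ZG'"
     "C1 \<inter> C2 = {\<one>\<^bsub>sub_grp Gbar ZG'\<^esub>}" "C1 <#>\<^bsub>sub_grp Gbar ZG'\<^esub> C2 = carrier (sub_grp Gbar ZG')"
    using ZG unfolding internal_direct_product_def C1_def C2_def ZG'_def by auto
  have ZGd1: "C1 \<inter> C2 = {\<one>}" using ZGu(3) by simp
  have ZGd2: "C1 <#> C2 = ZG'" using ZGu(4) unfolding set_mult_def by simp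
  have sC1: "subgroup C1 (sub_grp Gbar ZG')" "subgroup C2 (sub_grp Gbar ZG')"
    using ZGu(1,2) normal_imp_subgroup by auto
  have ZGd3: "C1 \<subseteq> ZG'" using subgroup.subset[OF sC1(1)] by simp
  have ZGd4: "C2 \<subseteq> ZG'" using subgroup.subset[OF sC1(2)] by simp
  note ZGd = ZGd1 ZGd2 ZGd3 ZGd4
  have C1H: "C1 \<subseteq> H1" unfolding C1_def grp_center_def by auto
  have C2H: "C2 \<subseteq> H2" unfolding C2_def grp_center_def by auto
  have prod: "H1 <#> H2 = G"
  proof
    show "H1 <#> H2 \<subseteq> G" unfolding set_mult_def using H1G H2G subgroup.m_closed[OF sG] by blast
  next
    show "G \<subseteq> H1 <#> H2"
    proof
      fix g assume g: "g \<in> G"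
      have "G1 <#> G2 = G" using decG unfolding internal_direct_product_def set_mult_def by simp
      then have "g \<in> G1 <#> G2" using g by simp
      then obtain g1 g2 where g1: "g1 \<in> G1" and g2: "g2 \<in> G2" and ge: "g = g1 \<otimes> g2"
        unfolding set_mult_def by blast
      have "g1 \<in> (R1 <#> grp_center Gbar) \<inter> G" using GX1 g1 G12 unfolding Z_def by blast
      then have "g1 \<in> H1 <#> ZG'" using X1 unfolding ZG'_def by simp
      then obtain h1 z1 where h1: "h1 \<in> H1" and z1: "z1 \<in> ZG'" and e1: "g1 = h1 \<otimes> z1"
        unfolding set_mult_def by auto
      have "g2 \<in> (R2 <#> grp_center Gbar) \<inter> G" using GX2 g2 G12 unfolding Z_def by blast
      then have "g2 \<in> H2 <#> ZG'" using X2 unfolding ZG'_def by simp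
      then obtain h2 z2 where h2: "h2 \<in> H2" and z2: "z2 \<in> ZG'" and e2: "g2 = h2 \<otimes> z2"
        unfolding set_mult_def by auto
      have zz: "z1 \<otimes> z2 \<in> ZG'"
      proof -
        have "z1 \<otimes> z2 \<in> G" using z1 z2 ZG'G subgroup.m_closed[OF sG] by blast
        moreover have "\<forall>x\<in>G. z1 \<otimes> z2 \<otimes> x = x \<otimes> (z1 \<otimes> z2)"
        proof
          fix x assume x: "x \<in> G"
          have c: "z1 \<in> carrier Gbar" "z2 \<in> carrier Gbar" "x \<in> carrier Gbar" using z1 z2 x ZG'G Gc by auto
          have "z1 \<otimes> z2 \<otimes> x = z1 \<otimes> (x \<otimes> z2)" using c ZG'comm[OF z2 x] by (simp add: m_assoc)
          also have "\<dots> = x \<otimes> (z1 \<otimes> z2)" using c ZG'comm[OF z1 x] by (simp add: m_assoc[symmetric])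
          finally show "z1 \<otimes> z2 \<otimes> x = x \<otimes> (z1 \<otimes> z2)" .
        qed
        ultimately show ?thesis unfolding ZG'_def grp_center_def by simp
      qed
      then have "z1 \<otimes> z2 \<in> C1 <#> C2" using ZGd(2) by simp
      then obtain c1 c2 where c1: "c1 \<in> C1" and c2: "c2 \<in> C2" and ec: "z1 \<otimes> z2 = c1 \<otimes> c2"
        unfolding set_mult_def by blast
      have cc: "h1 \<in> carrier Gbar" "h2 \<in> carrier Gbar" "z1 \<in> carrier Gbar" "z2 \<in> carrier Gbar"
        "c1 \<in> carrier Gbar" "c2 \<in> carrier Gbar"
        using h1 h2 z1 z2 c1 c2 H1G H2G ZG'G Gc C1H C2H by auto
      have h2G: "h2 \<in> G" using h2 H2G by auto
      have "g = h1 \<otimes> (z1 \<otimes> h2) \<otimes> z2" using cc by (simp add: ge e1 e2 m_assoc)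
      also have "\<dots> = h1 \<otimes> h2 \<otimes> (z1 \<otimes> z2)" using cc ZG'comm[OF z1 h2G] by (simp add: m_assoc)
      also have "\<dots> = h1 \<otimes> (h2 \<otimes> c1) \<otimes> c2" using cc ec by (simp add: m_assoc)
      also have "\<dots> = h1 \<otimes> (c1 \<otimes> h2) \<otimes> c2"
        using ZG'comm[OF _ h2G, of c1] c1 ZGd(3) by auto
      also have "\<dots> = (h1 \<otimes> c1) \<otimes> (h2 \<otimes> c2)" using cc by (simp add: m_assoc)
      finally have ge2: "g = (h1 \<otimes> c1) \<otimes> (h2 \<otimes> c2)" .
      have "h1 \<otimes> c1 \<in> H1" using subgroup.m_closed[OF H1, of h1 c1] h1 c1 C1H by auto
      moreover have "h2 \<otimes> c2 \<in> H2" using subgroup.m_closed[OF H2, of h2 c2] h2 c2 C2H by auto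
      ultimately show "g \<in> H1 <#> H2" using ge2 unfolding set_mult_def by blast
    qed
  qed
  have prodK: "H1 <#>\<^bsub>sub_grp Gbar G\<^esub> H2 = carrier (sub_grp Gbar G)"
    using prod unfolding set_mult_def by simp
  have HHK: "\<forall>a\<in>H1. \<forall>b\<in>H2. a \<otimes>\<^bsub>sub_grp Gbar G\<^esub> b = b \<otimes>\<^bsub>sub_grp Gbar G\<^esub> a"
    using HH by auto
  have nH1: "H1 \<lhd> sub_grp Gbar G" by (rule group.comm_prod_normal[OF K H1 H2 prodK HHK])
  have nH2: "H2 \<lhd> sub_grp Gbar G" by (rule group.comm_prod_normal2[OF K H1 H2 prodK HHK])
  have inter: "H1 \<inter> H2 = {\<one>}"
  proof
    show "{\<one>} \<subseteq> H1 \<inter> H2" using subgroup.one_closed[OF H1] subgroup.one_closed[OF H2] by simp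
  next
    show "H1 \<inter> H2 \<subseteq> {\<one>}"
    proof
      fix x assume x: "x \<in> H1 \<inter> H2"
      have "x \<in> C1" unfolding C1_def grp_center_def using x HH[symmetric] by auto
      moreover have "x \<in> C2" unfolding C2_def grp_center_def using x HH by auto
      ultimately show "x \<in> {\<one>}" using ZGd(1) by auto
    qed
  qed
  show ?thesis unfolding internal_direct_product_def using nH1 nH2 inter prodK by simp
qed


theorem mainTheorem13:
  fixes Gbar :: "('a, 'b) monoid_scheme"
    and G G1 G2 R1 R2 H1 H2 :: "'a set"
  assumes fg: "finitely_generated (sub_grp Gbar G)"
    and nil: "nilpotent_group (sub_grp Gbar G)"
    and tf: "torsion_free (sub_grp Gbar G)"
    and closure: "is_rational_closure Gbar G"
    and decG: "internal_direct_product (sub_grp Gbar G) G1 G2"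
    and rat1: "rational_subgroup Gbar R1"
    and rat2: "rational_subgroup Gbar R2"
    and decR: "internal_direct_product Gbar R1 R2"
    and match1: "rat_closure Gbar G1 <#>\<^bsub>Gbar\<^esub> grp_center Gbar = R1 <#>\<^bsub>Gbar\<^esub> grp_center Gbar"
    and match2: "rat_closure Gbar G2 <#>\<^bsub>Gbar\<^esub> grp_center Gbar = R2 <#>\<^bsub>Gbar\<^esub> grp_center Gbar"
    and H1: "subgroup H1 (sub_grp Gbar G)"
    and H2: "subgroup H2 (sub_grp Gbar G)"
    and X1: "(R1 <#>\<^bsub>Gbar\<^esub> grp_center Gbar) \<inter> G = H1 <#>\<^bsub>Gbar\<^esub> grp_center (sub_grp Gbar G)"
    and X2: "(R2 <#>\<^bsub>Gbar\<^esub> grp_center Gbar) \<inter> G = H2 <#>\<^bsub>Gbar\<^esub> grp_center (sub_grp Gbar G)"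
    and ZG: "internal_direct_product (sub_grp Gbar (grp_center (sub_grp Gbar G)))
               (grp_center (sub_grp Gbar H1)) (grp_center (sub_grp Gbar H2))"
  shows "internal_direct_product (sub_grp Gbar G) H1 H2"
  by (rule main_aux[OF assms])

end
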